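(* Let $q$ be a prime power, let $\gamma\in\mathbb{F}_q^*$ have multiplicative order $l$, and let $D=\langle\gamma\rangle=\{1,\gamma,\dots,\gamma^{l-1}\}$. Let $G=\mathbb{F}_q\rtimes\mathbb{Z}_l$ be the group on the set $\mathbb{F}_q\times\mathbb{Z}_l$ with multiplication $(x,i)(y,j)=(x+\gamma^i y,\ i+j)$. Let $D'\subseteq\mathbb{F}_q$ satisfy $dD'=D'$ for all $d\in D$, let $u\in\mathbb{F}_q^*$, let $S=\{-u+x: x\in D'\}$, $s=|S|$, and $E=\{(x,i): x\in S,\ i\in\mathbb{Z}_l\}\subseteq G$. Suppose $0\notin S$ and that there are integers $\alpha,\beta$ such that for every $y\in\mathbb{F}_q$, $$\#\{(x,d)\in D'\times D:\ x-ud=y\}=\beta+\alpha\,[y=0]$$ (equivalently, in the group ring $\mathbb{Z}[(\mathbb{F}_q,+)]$, $\underline{D'}\,\underline{uD}^{-1}=\alpha\mathbf{1}+\beta\,\underline{\mathbb{F}_q}$). Then the Cayley digraph $\mathrm{Cay}(G,E)$ is a directed strongly regular graph with parameters $(lq,\ ls,\ \beta s,\ \beta s+\alpha,\ \beta s)$.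
   Context: For a group $G$ and $E\subseteq G$ not containing the identity, the Cayley digraph $\mathrm{Cay}(G,E)$ has vertex set $G$ and an arc $g\to h$ iff $g^{-1}h\in E$. $[y=0]$ is $1$ if $y=0$ and $0$ otherwise. In the group ring notation, $\underline{X}=\sum_{x\in X}x$ and $\underline{X}^{-1}=\sum_{x\in X}x^{-1}$ (here the group is additive, so $x^{-1}=-x$). A directed strongly regular graph with parameters $(v,k,t,\lambda,\mu)$ is a digraph (no loops, no multiple arcs) on $v$ vertices whose adjacency matrix $A$ satisfies $A^2=tI+\lambda A+\mu(J-I-A)$ and $AJ=JA=kJ$. *)

theory Defs
  imports "HOL-Algebra.Group"
begin

definition mult_ord :: "'a::field \<Rightarrow> nat" where
  "mult_ord g = (LEAST n. 0 < n \<and> g ^ n = 1)"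

definition semidirect :: "'a::field \<Rightarrow> nat \<Rightarrow> ('a \<times> nat) monoid" where
  "semidirect g l = \<lparr> carrier = (UNIV :: 'a set) \<times> {0..<l},
     mult = (\<lambda>(x,i) (y,j). (x + g ^ i * y, (i + j) mod l)),
     one = (0, 0) \<rparr>"

definition cayley_arc :: "('b, 'c) monoid_scheme \<Rightarrow> 'b set \<Rightarrow> 'b \<Rightarrow> 'b \<Rightarrow> bool" where
  "cayley_arc G E a b \<longleftrightarrow> inv\<^bsub>G\<^esub> a \<otimes>\<^bsub>G\<^esub> b \<in> E"

text \<open>Directed strongly regular graph with parameters (v,k,t,lambda,mu) on vertex set V,
  arc relation A (simple digraph: no loops; multiple arcs impossible for a relation).
  A^2 = tI + lambda A + mu (J - I - A) entrywise, and AJ = JA = kJ.\<close>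
definition dsrg :: "'v set \<Rightarrow> ('v \<Rightarrow> 'v \<Rightarrow> bool) \<Rightarrow> int \<Rightarrow> int \<Rightarrow> int \<Rightarrow> int \<Rightarrow> int \<Rightarrow> bool" where
  "dsrg V A v k t lam mu \<longleftrightarrow>
     finite V \<and> int (card V) = v \<and>
     (\<forall>x\<in>V. \<not> A x x) \<and>
     (\<forall>x\<in>V. int (card {y\<in>V. A x y}) = k) \<and>
     (\<forall>y\<in>V. int (card {x\<in>V. A x y}) = k) \<and>
     (\<forall>x\<in>V. \<forall>y\<in>V. int (card {z\<in>V. A x z \<and> A z y}) =
        (if x = y then t else if A x y then lam else mu))"

end

theory Submission imports Defs begin

lemma ord_props:
  fixes \<gamma> :: "'a::{finite,field}"
  assumes "\<gamma> \<noteq> 0"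
  shows "0 < mult_ord \<gamma> \<and> \<gamma> ^ mult_ord \<gamma> = 1"
proof -
  have "\<not> inj (\<lambda>n::nat. \<gamma> ^ n)"
  proof
    assume "inj (\<lambda>n::nat. \<gamma> ^ n)"
    hence "finite (UNIV :: nat set)"
      using finite_imageD[of "\<lambda>n::nat. \<gamma> ^ n" UNIV] by (simp add: finite_subset)
    thus False by simp
  qed
  then obtain m n :: nat where mn: "m \<noteq> n" "\<gamma>^m = \<gamma>^n" unfolding inj_def by blast
  have "\<exists>k>0. \<gamma>^k = 1"
  proof (cases "m < n")
    case True
    hence "\<gamma>^n = \<gamma>^m * \<gamma>^(n-m)" by (simp flip: power_add)
    with mn assms have "\<gamma>^(n-m) = 1" by simp
    with True show ?thesis by (intro exI[of _ "n-m"]) auto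
  next
    case False
    hence "\<gamma>^m = \<gamma>^n * \<gamma>^(m-n)" using mn by (simp flip: power_add)
    with mn assms have "\<gamma>^(m-n) = 1" by simp
    with False mn show ?thesis by (intro exI[of _ "m-n"]) auto
  qed
  thus ?thesis unfolding mult_ord_def by (metis (mono_tags, lifting) LeastI_ex)
qed

lemma ord_inj:
  fixes \<gamma> :: "'a::{finite,field}"
  assumes "\<gamma> \<noteq> 0"
  shows "inj_on (\<lambda>k. \<gamma>^k) {0..<mult_ord \<gamma>}"
proof (rule inj_onI)
  fix a b assume ab: "a \<in> {0..<mult_ord \<gamma>}" "b \<in> {0..<mult_ord \<gamma>}" "\<gamma>^a = \<gamma>^b"
  show "a = b"
  proof (rule ccontr)
    assume "a \<noteq> b"
    then obtain x y where xy: "x < y" "y < mult_ord \<gamma>" "\<gamma>^x = \<gamma>^y"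
      using ab by (metis atLeastLessThan_iff linorder_neqE_nat)
    have "\<gamma>^y = \<gamma>^x * \<gamma>^(y-x)" using xy(1) by (simp flip: power_add)
    with xy assms have "\<gamma>^(y-x) = 1" by simp
    moreover have "y - x < mult_ord \<gamma>" "0 < y - x" using xy by auto
    ultimately show False unfolding mult_ord_def by (metis (mono_tags, lifting) not_less_Least)
  qed
qed

lemma pow_mod:
  fixes \<gamma> :: "'a::field"
  assumes "\<gamma>^l = 1"
  shows "\<gamma>^n = \<gamma>^(n mod l)"
proof -
  have "\<gamma>^n = \<gamma>^(l*(n div l) + n mod l)" by simp
  also have "\<dots> = (\<gamma>^l)^(n div l) * \<gamma>^(n mod l)" by (simp only: power_add power_mult)
  also have "\<dots> = \<gamma>^(n mod l)" using assms by simp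
  finally show ?thesis .
qed

lemma pow_inv:
  fixes \<gamma> :: "'a::field"
  assumes "\<gamma>^l = 1" "i \<le> l"
  shows "\<gamma>^((l - i) mod l) = inverse (\<gamma>^i)"
proof -
  have "\<gamma>^(l-i) * \<gamma>^i = 1" using assms by (simp flip: power_add)
  hence "\<gamma>^(l-i) = inverse (\<gamma>^i)" by (metis inverse_unique mult.commute)
  thus ?thesis using pow_mod[OF assms(1), of "l-i"] by simp
qed

lemma semi_monoid:
  fixes \<gamma> :: "'a::field"
  assumes "\<gamma>^l = 1" "0 < l"
  shows "monoid (semidirect \<gamma> l)"
proof (rule monoidI)
  fix x y z assume "x \<in> carrier (semidirect \<gamma> l)" "y \<in> carrier (semidirect \<gamma> l)" "z \<in> carrier (semidirect \<gamma> l)"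
  then obtain a i b j c k where "x = (a,i)" "y = (b,j)" "z = (c,k)" by (metis prod.exhaust)
  moreover have "\<gamma>^((i+j) mod l) = \<gamma>^i * \<gamma>^j" using pow_mod[OF assms(1), of "i+j"] by (simp add: power_add)
  moreover have "((i + j) mod l + k) mod l = (i + (j + k) mod l) mod l" by (simp add: mod_add_left_eq mod_add_right_eq add.assoc)
  ultimately show "x \<otimes>\<^bsub>semidirect \<gamma> l\<^esub> y \<otimes>\<^bsub>semidirect \<gamma> l\<^esub> z = x \<otimes>\<^bsub>semidirect \<gamma> l\<^esub> (y \<otimes>\<^bsub>semidirect \<gamma> l\<^esub> z)"
    by (simp add: semidirect_def algebra_simps)
qed (use assms in \<open>auto simp: semidirect_def\<close>)

lemma semi_inv:
  fixes \<gamma> :: "'a::field"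
  assumes "\<gamma>^l = 1" "0 < l" "\<gamma> \<noteq> 0" "i < l"
  shows "inv\<^bsub>semidirect \<gamma> l\<^esub> (a,i) = (- inverse (\<gamma>^i) * a, (l - i) mod l)"
proof -
  interpret monoid "semidirect \<gamma> l" by (rule semi_monoid[OF assms(1,2)])
  have pi: "\<gamma>^((l - i) mod l) = inverse (\<gamma>^i)" using pow_inv[OF assms(1)] assms(4) by simp
  have nz: "\<gamma>^i \<noteq> 0" using assms(3) by simp
  have m1: "((l - i) mod l + i) mod l = 0"
    by (metis assms(4) le_add_diff_inverse2 less_imp_le_nat mod_add_left_eq mod_self)
  have m2: "(i + (l - i) mod l) mod l = 0" using m1 by (simp add: add.commute)
  have c1: "(a,i) \<in> carrier (semidirect \<gamma> l)" "(- inverse (\<gamma>^i) * a, (l - i) mod l) \<in> carrier (semidirect \<gamma> l)"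
    using assms by (auto simp: semidirect_def)
  have e1: "(a,i) \<otimes>\<^bsub>semidirect \<gamma> l\<^esub> (- inverse (\<gamma>^i) * a, (l - i) mod l) = \<one>\<^bsub>semidirect \<gamma> l\<^esub>"
    using nz m2 by (simp add: semidirect_def)
  have e2: "(- inverse (\<gamma>^i) * a, (l - i) mod l) \<otimes>\<^bsub>semidirect \<gamma> l\<^esub> (a,i) = \<one>\<^bsub>semidirect \<gamma> l\<^esub>"
    using nz m1 pi by (simp add: semidirect_def)
  show ?thesis using inv_unique'[OF c1 e1 e2] by simp
qed

lemma semi_arc:
  fixes \<gamma> :: "'a::field"
  assumes "\<gamma>^l = 1" "0 < l" "\<gamma> \<noteq> 0" "i < l" "j < l"
  shows "cayley_arc (semidirect \<gamma> l) (S \<times> {0..<l}) (a,i) (b,j) \<longleftrightarrow> inverse (\<gamma>^i) * (b - a) \<in> S"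
  using semi_inv[OF assms(1-4), of a] pow_inv[OF assms(1), of i] assms
  by (simp add: cayley_arc_def semidirect_def algebra_simps)

lemma modA: "m < l \<Longrightarrow> i < l \<Longrightarrow> ((m + l - i) mod l + i) mod l = (m::nat)"
proof -
  assume a: "m < l" "i < l"
  have "((m + l - i) mod l + i) mod l = (m + l - i + i) mod l" by (simp add: mod_add_left_eq)
  also have "m + l - i + i = m + l" using a by simp
  finally show ?thesis using a by simp
qed

lemma modB: "k < l \<Longrightarrow> i < l \<Longrightarrow> ((k + i) mod l + l - i) mod l = (k::nat)"
proof -
  assume a: "k < l" "i < l"
  have "(k + i) mod l + l - i = (k + i) mod l + (l - i)" using a by simp
  hence "((k + i) mod l + l - i) mod l = (k + i + (l - i)) mod l" by (simp add: mod_add_left_eq)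
  also have "k + i + (l - i) = k + l" using a by simp
  finally show ?thesis using a by simp
qed

theorem lemma4p1:
  fixes \<gamma> u :: "'a::{finite, field}"
    and l :: nat
    and D D' S :: "'a set"
    and E :: "('a \<times> nat) set"
    and s :: nat
    and \<alpha> \<beta> :: int
  assumes "\<gamma> \<noteq> 0"
    and "l = mult_ord \<gamma>"
    and "D = {\<gamma> ^ i | i. i < l}"
    and "\<forall>d\<in>D. (\<lambda>x. d * x) ` D' = D'"
    and "u \<noteq> 0"
    and "S = (\<lambda>x. - u + x) ` D'"
    and "s = card S"
    and "E = S \<times> {0..<l}"
    and "0 \<notin> S"
    and "\<forall>y. int (card {(x, d) \<in> D' \<times> D. x - u * d = y}) = \<beta> + \<alpha> * (if y = 0 then 1 else 0)"
  shows "dsrg (carrier (semidirect \<gamma> l)) (cayley_arc (semidirect \<gamma> l) E)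
           (int (l * card (UNIV :: 'a set))) (int (l * s)) (\<beta> * int s) (\<beta> * int s + \<alpha>) (\<beta> * int s)"
proof -
  note g0 = assms(1)
  have lpos: "0 < l" and gl: "\<gamma>^l = 1" using ord_props[OF g0] assms(2) by auto
  have injpow: "inj_on (\<lambda>k. \<gamma>^k) {0..<l}" using ord_inj[OF g0] assms(2) by simp
  define V where "V = (UNIV :: 'a set) \<times> {0..<l}"
  have carr: "carrier (semidirect \<gamma> l) = V" by (simp add: V_def semidirect_def)
  have arc: "cayley_arc (semidirect \<gamma> l) E (a,i) (b,j) \<longleftrightarrow> inverse (\<gamma>^i) * (b - a) \<in> S"
    if "i < l" "j < l" for a b i j
    using semi_arc[OF gl lpos g0 that] assms(8) by simp
  have gnz: "\<gamma>^i \<noteq> 0" for i using g0 by simp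
  have finV: "finite V" by (simp add: V_def)
  have cardD': "card D' = s"
    using assms(6,7) by (simp add: card_image inj_on_def)
  have SD: "t \<in> S \<longleftrightarrow> t + u \<in> D'" for t
    using assms(6) by (auto simp: image_iff algebra_simps)
  have powD: "\<gamma>^k \<in> D" if "k < l" for k using assms(3) that by auto
  have inv_in: "d * x \<in> D'" if "d \<in> D" "x \<in> D'" for d x
    using assms(4) that by blast
  have powinv: "inverse (\<gamma>^k) \<in> D" if "k < l" for k
    using pow_inv[OF gl, of k] that powD[of "(l-k) mod l"] lpos by simp
  have pow_shift: "\<gamma>^((m + l - i) mod l) = \<gamma>^m * inverse (\<gamma>^i)" if "i < l" for m i
  proof -
    have "\<gamma>^((m + l - i) mod l) = \<gamma>^(m + (l - i))" using pow_mod[OF gl, of "m + (l-i)"] that by simp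
    also have "\<dots> = \<gamma>^m * \<gamma>^((l - i) mod l)" using pow_mod[OF gl, of "l-i"] by (simp add: power_add)
    finally show ?thesis using pow_inv[OF gl, of i] that by simp
  qed
  have pow_add_mod: "\<gamma>^((k + i) mod l) = \<gamma>^k * \<gamma>^i" for k i
    using pow_mod[OF gl, of "k+i"] by (simp add: power_add)
  have noloop: "\<forall>x\<in>V. \<not> cayley_arc (semidirect \<gamma> l) E x x"
    using arc assms(9) by (auto simp: V_def)
  have outdeg: "\<forall>x\<in>V. int (card {y\<in>V. cayley_arc (semidirect \<gamma> l) E x y}) = int (l * s)"
  proof
    fix x assume "x \<in> V"
    then obtain a i where x: "x = (a,i)" "i < l" by (auto simp: V_def)
    have "{y\<in>V. cayley_arc (semidirect \<gamma> l) E x y} = (\<lambda>(t,j). (a + \<gamma>^i * t, j)) ` (S \<times> {0..<l})"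
    proof (intro equalityI subsetI)
      fix y assume "y \<in> {y\<in>V. cayley_arc (semidirect \<gamma> l) E x y}"
      then obtain b j where y: "y = (b,j)" "j < l" "inverse (\<gamma>^i) * (b - a) \<in> S"
        using arc x by (auto simp: V_def)
      have "b = a + \<gamma>^i * (inverse (\<gamma>^i) * (b - a))" using gnz[of i] by (simp add: field_simps)
      thus "y \<in> (\<lambda>(t,j). (a + \<gamma>^i * t, j)) ` (S \<times> {0..<l})" using y by (auto simp: image_iff)
    next
      fix y assume "y \<in> (\<lambda>(t,j). (a + \<gamma>^i * t, j)) ` (S \<times> {0..<l})"
      then obtain t j where y: "y = (a + \<gamma>^i * t, j)" "t \<in> S" "j < l" using g0 by auto
      have hh: "inverse (\<gamma>^i) * (\<gamma>^i * t) = t" using gnz[of i] by (simp add: field_simps)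
      show "y \<in> {y\<in>V. cayley_arc (semidirect \<gamma> l) E x y}" using y(1,3) arc x(2) by (simp add: V_def x(1) hh y(2))
    qed
    moreover have "inj_on (\<lambda>(t,j). (a + \<gamma>^i * t, j)) (S \<times> {0..<l})"
      using gnz[of i] by (auto simp: inj_on_def)
    ultimately show "int (card {y\<in>V. cayley_arc (semidirect \<gamma> l) E x y}) = int (l * s)"
      by (simp add: card_image card_cartesian_product assms(7))
  qed
  have indeg: "\<forall>y\<in>V. int (card {x\<in>V. cayley_arc (semidirect \<gamma> l) E x y}) = int (l * s)"
  proof
    fix y assume "y \<in> V"
    then obtain b j where y: "y = (b,j)" "j < l" by (auto simp: V_def)
    have "{x\<in>V. cayley_arc (semidirect \<gamma> l) E x y} = (\<lambda>(t,i). (b - \<gamma>^i * t, i)) ` (S \<times> {0..<l})"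
    proof (intro equalityI subsetI)
      fix x assume "x \<in> {x\<in>V. cayley_arc (semidirect \<gamma> l) E x y}"
      then obtain a i where x: "x = (a,i)" "i < l" "inverse (\<gamma>^i) * (b - a) \<in> S"
        using arc y by (auto simp: V_def)
      have "a = b - \<gamma>^i * (inverse (\<gamma>^i) * (b - a))" using gnz[of i] by (simp add: field_simps)
      thus "x \<in> (\<lambda>(t,i). (b - \<gamma>^i * t, i)) ` (S \<times> {0..<l})" using x by (auto simp: image_iff)
    next
      fix x assume "x \<in> (\<lambda>(t,i). (b - \<gamma>^i * t, i)) ` (S \<times> {0..<l})"
      then obtain t i where x: "x = (b - \<gamma>^i * t, i)" "t \<in> S" "i < l" using g0 by auto
      have hh: "inverse (\<gamma>^i) * (\<gamma>^i * t) = t" using gnz[of i] by (simp add: field_simps)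
      show "x \<in> {x\<in>V. cayley_arc (semidirect \<gamma> l) E x y}" using x(1,3) arc y(2) by (simp add: V_def y(1) hh x(2))
    qed
    moreover have "inj_on (\<lambda>(t,i). (b - \<gamma>^i * t, i)) (S \<times> {0..<l})"
      using gnz by (auto simp: inj_on_def)
    ultimately show "int (card {x\<in>V. cayley_arc (semidirect \<gamma> l) E x y}) = int (l * s)"
      by (simp add: card_image card_cartesian_product assms(7) mult.commute)
  qed
  have cnt: "int (card {(x1, k) \<in> D' \<times> {0..<l}. x1 - u * \<gamma>^k = y}) = \<beta> + \<alpha> * (if y = 0 then 1 else 0)" for y
  proof -
    have im: "(\<lambda>(x1,k). (x1, \<gamma>^k)) ` {(x1, k) \<in> D' \<times> {0..<l}. x1 - u * \<gamma>^k = y} = {(x, d) \<in> D' \<times> D. x - u * d = y}"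
    proof (intro equalityI subsetI)
      fix p assume "p \<in> (\<lambda>(x1,k). (x1, \<gamma>^k)) ` {(x1, k) \<in> D' \<times> {0..<l}. x1 - u * \<gamma>^k = y}"
      then obtain x1 k where "p = (x1, \<gamma>^k)" "x1 \<in> D'" "k < l" "x1 - u * \<gamma>^k = y" by auto
      thus "p \<in> {(x, d) \<in> D' \<times> D. x - u * d = y}" using powD by simp
    next
      fix p assume "p \<in> {(x, d) \<in> D' \<times> D. x - u * d = y}"
      then obtain x d where p: "p = (x, d)" "x \<in> D'" "d \<in> D" "x - u * d = y" by blast
      then obtain k where k: "k < l" "d = \<gamma>^k" using assms(3) by blast
      have "(x, k) \<in> {(x1, k) \<in> D' \<times> {0..<l}. x1 - u * \<gamma>^k = y}" using p k by simp
      thus "p \<in> (\<lambda>(x1,k). (x1, \<gamma>^k)) ` {(x1, k) \<in> D' \<times> {0..<l}. x1 - u * \<gamma>^k = y}"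
        using p(1) k(2) by (metis (no_types, lifting) case_prod_conv image_eqI)
    qed
    have inj: "inj_on (\<lambda>(x1,k). (x1, \<gamma>^k)) {(x1, k) \<in> D' \<times> {0..<l}. x1 - u * \<gamma>^k = y}"
      using injpow by (auto simp: inj_on_def)
    have "card {(x1, k) \<in> D' \<times> {0..<l}. x1 - u * \<gamma>^k = y} = card {(x, d) \<in> D' \<times> D. x - u * d = y}"
      using card_image[OF inj] unfolding im by (rule sym)
    thus ?thesis using assms(10) by simp
  qed
  have paths: "int (card {z\<in>V. cayley_arc (semidirect \<gamma> l) E (a,i) z \<and> cayley_arc (semidirect \<gamma> l) E z (b,j)})
      = \<beta> * int s + \<alpha> * (if inverse (\<gamma>^i) * (b - a) \<in> S then 1 else 0)" if ij: "i < l" "j < l" for a b i j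
  proof -
    define w where "w = inverse (\<gamma>^i) * (b - a)"
    have hhi: "\<And>t. inverse (\<gamma>^i) * (\<gamma>^i * t) = t" using gnz[of i] by (simp add: field_simps)
    define P where "P = {z\<in>V. cayley_arc (semidirect \<gamma> l) E (a,i) z \<and> cayley_arc (semidirect \<gamma> l) E z (b,j)}"
    define Q where "Q = Sigma D' (\<lambda>x2. {(x1, k) \<in> D' \<times> {0..<l}. x1 - u * \<gamma>^k = w + u - x2})"
    have Pe: "P = {(c,m). m < l \<and> inverse (\<gamma>^i) * (c - a) \<in> S \<and> inverse (\<gamma>^m) * (b - c) \<in> S}"
      unfolding P_def V_def using arc ij by auto
    define f where "f = (\<lambda>(c::'a,m::nat). (\<gamma>^((m + l - i) mod l) * (inverse (\<gamma>^m) * (b - c) + u), (inverse (\<gamma>^i) * (c - a) + u, (m + l - i) mod l)))"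
    define g where "g = (\<lambda>(x2::'a,(x1::'a,k::nat)). (a + \<gamma>^i * (x1 - u), (k + i) mod l))"
    have "bij_betw f P Q"
    proof (rule bij_betw_byWitness[where f'=g])
      show "\<forall>z\<in>P. g (f z) = z"
      proof
        fix z assume "z \<in> P"
        then obtain c m where z: "z = (c,m)" "m < l" using Pe by auto
        have "((m + l - i) mod l + i) mod l = m"
          using modA z(2) ij by simp
        moreover have "a + \<gamma>^i * (inverse (\<gamma>^i) * (c - a) + u - u) = c" using gnz[of i] by (simp add: field_simps)
        ultimately show "g (f z) = z" by (simp add: f_def g_def z)
      qed
      show "\<forall>q\<in>Q. f (g q) = q"
      proof
        fix q assume "q \<in> Q"
        then obtain x2 x1 k where q: "q = (x2,(x1,k))" "k < l" "x1 - u * \<gamma>^k = w + u - x2" unfolding Q_def by auto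
        have k: "((k + i) mod l + l - i) mod l = k"
          using modB q(2) ij by simp
        have ba: "b - a = \<gamma>^i * (x1 - u * \<gamma>^k - u + x2)" using q(3) gnz[of i] unfolding w_def by (simp add: field_simps)
        have "\<gamma>^k * (inverse (\<gamma>^k * \<gamma>^i) * (b - (a + \<gamma>^i * (x1 - u))) + u) = x2"
        proof -
          have "b - (a + \<gamma>^i * (x1 - u)) = \<gamma>^i * (x2 - u * \<gamma>^k)" using ba by (simp add: algebra_simps)
          thus ?thesis using gnz[of i] gnz[of k] by (simp add: field_simps)
        qed
        moreover have "inverse (\<gamma>^i) * (a + \<gamma>^i * (x1 - u) - a) + u = x1" using gnz[of i] by (simp add: field_simps)
        ultimately show "f (g q) = q" using k by (simp add: f_def g_def q pow_add_mod)
      qed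
      show "f ` P \<subseteq> Q"
      proof
        fix q assume "q \<in> f ` P"
        then obtain c m where cm: "q = f (c,m)" "m < l" "inverse (\<gamma>^i) * (c - a) \<in> S" "inverse (\<gamma>^m) * (b - c) \<in> S"
          using Pe by auto
        define k where "k = (m + l - i) mod l"
        have kl: "k < l" using lpos by (simp add: k_def)
        have gk: "\<gamma>^k = \<gamma>^m * inverse (\<gamma>^i)" using pow_shift ij by (simp add: k_def)
        have x2: "\<gamma>^k * (inverse (\<gamma>^m) * (b - c) + u) \<in> D'"
          using inv_in[OF powD[OF kl]] cm(4) SD by simp
        have x1: "inverse (\<gamma>^i) * (c - a) + u \<in> D'" using cm(3) SD by simp
        have eq: "inverse (\<gamma>^i) * (c - a) + u - u * \<gamma>^k = w + u - \<gamma>^k * (inverse (\<gamma>^m) * (b - c) + u)"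
          unfolding gk w_def using gnz[of i] gnz[of m] by (simp add: field_simps)
        have fe: "f (c,m) = (\<gamma>^k * (inverse (\<gamma>^m) * (b - c) + u), (inverse (\<gamma>^i) * (c - a) + u, k))"
          by (simp add: f_def k_def)
        show "q \<in> Q" using x1 x2 kl eq unfolding cm(1) fe Q_def by simp
      qed
      show "g ` Q \<subseteq> P"
      proof
        fix p assume "p \<in> g ` Q"
        then obtain x2 x1 k where q: "p = g (x2,(x1,k))" "x2 \<in> D'" "x1 \<in> D'" "k < l" "x1 - u * \<gamma>^k = w + u - x2" unfolding Q_def by auto
        have ba: "b - a = \<gamma>^i * (x1 - u * \<gamma>^k - u + x2)" using q(5) gnz[of i] unfolding w_def by (simp add: field_simps)
        have m: "(k + i) mod l < l" using lpos by simp
        have s1: "inverse (\<gamma>^i) * (a + \<gamma>^i * (x1 - u) - a) \<in> S"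
        proof -
          have "a + \<gamma>^i * (x1 - u) - a = \<gamma>^i * (x1 - u)" by simp
          thus ?thesis unfolding hhi using SD q(3) by (simp only: hhi) simp
        qed
        have e2: "inverse (\<gamma>^((k + i) mod l)) * (b - (a + \<gamma>^i * (x1 - u))) + u = inverse (\<gamma>^k) * x2"
        proof -
          have "b - (a + \<gamma>^i * (x1 - u)) = \<gamma>^i * (x2 - u * \<gamma>^k)" using ba by (simp add: algebra_simps)
          thus ?thesis using gnz[of i] gnz[of k] by (simp add: field_simps pow_add_mod)
        qed
        have "inverse (\<gamma>^k) * x2 \<in> D'" using inv_in[OF powinv[OF q(4)] q(2)] .
        hence s2: "inverse (\<gamma>^((k + i) mod l)) * (b - (a + \<gamma>^i * (x1 - u))) \<in> S" using SD e2 by simp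
        show "p \<in> P" using m s1 s2 unfolding Pe q(1) g_def by simp
      qed
    qed
    hence "int (card P) = int (card Q)" by (simp add: bij_betw_same_card)
    also have "int (card Q) = (\<Sum>x2\<in>D'. int (card {(x1, k) \<in> D' \<times> {0..<l}. x1 - u * \<gamma>^k = w + u - x2}))"
      unfolding Q_def by (subst card_SigmaI) (auto intro: finite_subset[of _ "D' \<times> {0..<l}"])
    also have "\<dots> = (\<Sum>x2\<in>D'. \<beta> + \<alpha> * (if x2 = w + u then 1 else 0))"
      by (rule sum.cong[OF refl], subst cnt, auto)
    also have "\<dots> = \<beta> * int s + \<alpha> * (if w + u \<in> D' then 1 else 0)"
      by (simp add: sum.distrib sum_distrib_left[symmetric] cardD' mult.commute)
    finally show ?thesis using SD unfolding P_def w_def by simp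
  qed
  show ?thesis unfolding dsrg_def carr
  proof (intro conjI)
    show "finite V" by (rule finV)
    show "int (card V) = int (l * card (UNIV :: 'a set))" by (simp add: V_def card_cartesian_product)
    show "\<forall>x\<in>V. \<not> cayley_arc (semidirect \<gamma> l) E x x" by (rule noloop)
    show "\<forall>x\<in>V. int (card {y\<in>V. cayley_arc (semidirect \<gamma> l) E x y}) = int (l * s)" by (rule outdeg)
    show "\<forall>y\<in>V. int (card {x\<in>V. cayley_arc (semidirect \<gamma> l) E x y}) = int (l * s)" by (rule indeg)
    show "\<forall>x\<in>V. \<forall>y\<in>V. int (card {z\<in>V. cayley_arc (semidirect \<gamma> l) E x z \<and> cayley_arc (semidirect \<gamma> l) E z y}) =
        (if x = y then \<beta> * int s else if cayley_arc (semidirect \<gamma> l) E x y then \<beta> * int s + \<alpha> else \<beta> * int s)"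
    proof (intro ballI)
      fix x y assume "x \<in> V" "y \<in> V"
      then obtain a i b j where xy: "x = (a,i)" "y = (b,j)" "i < l" "j < l" by (auto simp: V_def)
      show "int (card {z\<in>V. cayley_arc (semidirect \<gamma> l) E x z \<and> cayley_arc (semidirect \<gamma> l) E z y}) =
        (if x = y then \<beta> * int s else if cayley_arc (semidirect \<gamma> l) E x y then \<beta> * int s + \<alpha> else \<beta> * int s)"
        using paths[OF xy(3,4), of a b] arc[OF xy(3,4), of a b] assms(9) xy by auto
    qed
  qed
qed

end
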